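(* Let $d,n,k\in\mathbb{N}^+$. Let $S_n=2^{-n+3}\{0,1,\dots,\lfloor 2^n n^{-2}\rfloor\}^d\subset\mathbb{R}^d$ and $s_n=\#S_n$. Let $\{X_i\}_{i\ge1}$ be i.i.d. random variables, each uniformly distributed on $S_n$ (i.e. $\Pr(X_i=y)=1/s_n$ for every $y\in S_n$), and let $\mathcal{F}_i=\sigma(X_j:1\le j\le i-1)$, with $\mathcal{F}_1$ trivial. Then there exists $\ell\in\mathbb{N}^+$ such that for every sequence $\{y_i\}_{i\ge1}$ of $\mathbb{R}^d$-valued random variables with $y_i$ being $\mathcal{F}_i$-measurable for each $i$, we have \[ \Pr\left(N_n\left(\bigcup_{i=1}^{\ell}\{X_i+y_i\}\right)<s_n\right)\le\frac{1}{k\,2^n}. \]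
   Context: For a subset $X\subset\mathbb{R}^d$ (Euclidean metric), $N_n(X)$ denotes the maximal cardinality of a subset $S\subset X$ such that any two distinct points of $S$ are at distance $>2^{-n}$. $\lfloor x\rfloor$ is the integer part of $x$. *)

theory Defs
  imports "HOL-Probability.Probability"
begin

text \<open>N_n(X): maximal cardinality of a subset of X whose distinct points are at
  distance > 2^(-n). (Used only for finite X, where the maximum exists.)\<close>
definition sep_number :: "nat \<Rightarrow> ('a::metric_space) set \<Rightarrow> nat" where
  "sep_number n X = Max {card S | S. S \<subseteq> X \<and> finite S \<and>
      (\<forall>x\<in>S. \<forall>y\<in>S. x \<noteq> y \<longrightarrow> dist x y > 2 powr (- real n))}"

definition grid_set :: "nat \<Rightarrow> (real ^ 'd) set" where
  "grid_set n = {(2 powr (3 - real n)) *\<^sub>R (\<chi> i. real (f i)) | f.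
      \<forall>i. f i \<le> nat \<lfloor>2 ^ n / (real n)\<^sup>2\<rfloor>}"

definition past_sigma :: "'a measure \<Rightarrow> (nat \<Rightarrow> 'a \<Rightarrow> 'b::topological_space) \<Rightarrow> nat \<Rightarrow> 'a measure" where
  "past_sigma M X i = sigma (space M)
      (\<Union>j\<in>{1..<i}. {X j -` A \<inter> space M | A. A \<in> sets borel})"

end

theory Submission
  imports Defs
begin


definition sepd :: "nat \<Rightarrow> ('a::metric_space) set \<Rightarrow> bool" where
  "sepd n S \<longleftrightarrow> (\<forall>x\<in>S. \<forall>y\<in>S. x \<noteq> y \<longrightarrow> dist x y > 2 powr (- real n))"

lemma sep_cands_fin:
  assumes "finite Q"
  shows "finite {card S | S. S \<subseteq> Q \<and> finite S \<and> sepd n S}"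
proof -
  have "{card S | S. S \<subseteq> Q \<and> finite S \<and> sepd n S} \<subseteq> {..card Q}"
    using assms by (auto intro: card_mono)
  then show ?thesis using finite_subset by blast
qed

lemma sep_number_alt: "sep_number n X = Max {card S | S. S \<subseteq> X \<and> finite S \<and> sepd n S}"
  unfolding sep_number_def sepd_def by simp

lemma sep_ge:
  assumes "finite Q" "T \<subseteq> Q" "sepd n T"
  shows "card T \<le> sep_number n Q"
  unfolding sep_number_alt
  using assms sep_cands_fin[OF assms(1)] finite_subset
  by (intro Max_ge) auto

lemma sep_attain:
  assumes "finite Q"
  shows "\<exists>T. T \<subseteq> Q \<and> finite T \<and> sepd n T \<and> card T = sep_number n Q"
proof -
  have "{} \<subseteq> Q \<and> finite {} \<and> sepd n {}" by (auto simp: sepd_def)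
  then have ne: "{card S | S. S \<subseteq> Q \<and> finite S \<and> sepd n S} \<noteq> {}" by blast
  from Max_in[OF sep_cands_fin[OF assms] ne] show ?thesis
    unfolding sep_number_alt by auto
qed

lemma sep_mono:
  assumes "finite Q'" "Q \<subseteq> Q'"
  shows "sep_number n Q \<le> sep_number n Q'"
proof -
  obtain T where "T \<subseteq> Q" "finite T" "sepd n T" "card T = sep_number n Q"
    using sep_attain[of Q n] assms finite_subset by blast
  then show ?thesis using sep_ge[of Q' T n] assms by auto
qed

lemma sep_empty: "sep_number n {} = 0"
  using sep_attain[of "{}" n] by auto


lemma grid_finite: "finite (grid_set n :: (real^'d) set)"
proof -
  define N where "N = nat \<lfloor>2 ^ n / (real n)\<^sup>2\<rfloor>"
  have "grid_set n = (\<lambda>f. (2 powr (3 - real n)) *\<^sub>R (\<chi> i. real (f i))) ` (PiE (UNIV::'d set) (\<lambda>_. {..N}))"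
    unfolding grid_set_def N_def by (auto simp: PiE_UNIV_domain)
  moreover have "finite (PiE (UNIV::'d set) (\<lambda>_. {..N}))" by (intro finite_PiE) auto
  ultimately show ?thesis by simp
qed

lemma grid_zero: "(0::real^'d) \<in> grid_set n"
  unfolding grid_set_def by (rule CollectI, rule exI[of _ "\<lambda>_. 0"]) (auto simp: vec_eq_iff)

lemma grid_sep:
  assumes "x \<in> (grid_set n :: (real^'d) set)" "x' \<in> grid_set n" "x \<noteq> x'"
  shows "dist x x' \<ge> 8 * 2 powr (- real n)"
proof -
  define a where "a = (2::real) powr (3 - real n)"
  have a8: "a = 8 * 2 powr (- real n)" unfolding a_def
    by (simp add: powr_diff powr_minus divide_simps)
  obtain f g where x: "x = a *\<^sub>R (\<chi> i. real (f i))" and x': "x' = a *\<^sub>R (\<chi> i. real (g i))"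
    using assms(1,2) unfolding grid_set_def a_def by auto
  obtain i where fi: "f i \<noteq> g i" using assms(3) x x' by (metis vec_lambda_unique)
  have "\<bar>(x - x') $ i\<bar> = a * \<bar>real (f i) - real (g i)\<bar>"
    using x x' by (simp add: a_def abs_mult flip: right_diff_distrib)
  also have "\<dots> \<ge> a" using fi by (simp add: a_def)
  finally have "a \<le> \<bar>(x - x') $ i\<bar>" .
  also have "\<dots> \<le> norm (x - x')" by (rule component_le_norm_cart)
  finally show ?thesis by (simp add: dist_norm a8)
qed


lemma bad_card:
  fixes Gr :: "('a::real_normed_vector) set" and P :: "'a set"
  assumes P: "finite P" and Gr: "finite Gr"
    and gs: "\<And>x x'. x \<in> Gr \<Longrightarrow> x' \<in> Gr \<Longrightarrow> x \<noteq> x' \<Longrightarrow> dist x x' \<ge> 8 * 2 powr (- real n)"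
  shows "card {x\<in>Gr. sep_number n (P \<union> {x + c}) \<le> sep_number n P} \<le> sep_number n P"
proof -
  define \<delta> where "\<delta> = (2::real) powr (- real n)"
  have \<delta>: "\<delta> > 0" unfolding \<delta>_def by simp
  obtain T where T: "T \<subseteq> P" "finite T" "sepd n T" "card T = sep_number n P"
    using sep_attain[OF P] by blast
  define Bd where "Bd = {x\<in>Gr. sep_number n (P \<union> {x + c}) \<le> sep_number n P}"
  have near: "\<exists>t\<in>T. dist (x + c) t \<le> \<delta>" if x: "x \<in> Bd" for x
  proof (rule ccontr)
    assume "\<not> ?thesis"
    then have far: "\<forall>t\<in>T. dist (x + c) t > \<delta>" by auto
    then have nin: "x + c \<notin> T" using \<delta> by force
    have "sepd n (insert (x + c) T)"
      using T(3) far unfolding sepd_def \<delta>_def by (auto simp: dist_commute)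
    then have "card (insert (x + c) T) \<le> sep_number n (P \<union> {x + c})"
      using T(1) P by (intro sep_ge) auto
    then show False using x nin T(2,4) unfolding Bd_def by simp
  qed
  define h where "h x = (SOME t. t \<in> T \<and> dist (x + c) t \<le> \<delta>)" for x
  have h: "h x \<in> T \<and> dist (x + c) (h x) \<le> \<delta>" if "x \<in> Bd" for x
    using near[OF that] unfolding h_def by (rule someI2_bex) auto
  have "inj_on h Bd"
  proof (rule inj_onI)
    fix x x' assume xx: "x \<in> Bd" "x' \<in> Bd" "h x = h x'"
    have "dist x x' = dist (x + c) (x' + c)" by (simp add: dist_norm)
    also have "\<dots> \<le> dist (x + c) (h x) + dist (x' + c) (h x')"
      using xx(3) by (metis dist_commute dist_triangle)
    also have "\<dots> \<le> 2 * \<delta>" using h[OF xx(1)] h[OF xx(2)] by linarith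
    finally have "dist x x' < 8 * \<delta>" using \<delta> by linarith
    then show "x = x'" using gs xx(1,2) unfolding Bd_def \<delta>_def by force
  qed
  then have "card Bd \<le> card T"
    using h T(2) by (intro card_inj_on_le) auto
  then show ?thesis using T(4) unfolding Bd_def by simp
qed

definition phi :: "nat \<Rightarrow> nat \<Rightarrow> real \<Rightarrow> ('a::metric_space) set \<Rightarrow> real" where
  "phi n s L Q = (if sep_number n Q < s then L ^ (s - sep_number n Q) else 0)"

lemma phi_nonneg: "L \<ge> 0 \<Longrightarrow> phi n s L Q \<ge> 0"
  unfolding phi_def by auto

lemma phi_le:
  assumes "L \<ge> 1" "sep_number n Q \<ge> m"
  shows "phi n s L Q \<le> L ^ (s - m)"
  using assms unfolding phi_def by (auto intro!: power_increasing)

lemma phi_step: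
  fixes Gr :: "('a::real_normed_vector) set" and P :: "'a set"
  assumes P: "finite P" and Gr: "finite Gr" and s: "card Gr = s" and L: "L \<ge> 1"
    and gs: "\<And>x x'. x \<in> Gr \<Longrightarrow> x' \<in> Gr \<Longrightarrow> x \<noteq> x' \<Longrightarrow> dist x x' \<ge> 8 * 2 powr (- real n)"
  shows "(\<Sum>x\<in>Gr. phi n s L (P \<union> {x + c})) \<le> ((real s - 1) + real s / L) * phi n s L P"
proof -
  define m where "m = sep_number n P"
  have mono: "sep_number n (P \<union> {x + c}) \<ge> m" for x
    unfolding m_def using P by (intro sep_mono) auto
  show ?thesis
  proof (cases "m < s")
    case False
    then have "phi n s L (P \<union> {x + c}) = 0" for x
      using mono[of x] unfolding phi_def by auto
    moreover have "phi n s L P = 0" using False unfolding phi_def m_def by auto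
    ultimately show ?thesis by simp
  next
    case True
    define Bd where "Bd = {x\<in>Gr. sep_number n (P \<union> {x + c}) \<le> m}"
    have cB: "card Bd \<le> m" using bad_card[OF P Gr gs, of c] unfolding Bd_def m_def by simp
    have fB: "finite Bd" using Gr unfolding Bd_def by simp
    have BG: "Bd \<subseteq> Gr" unfolding Bd_def by auto
    have "(\<Sum>x\<in>Gr. phi n s L (P \<union> {x + c}))
        = (\<Sum>x\<in>Bd. phi n s L (P \<union> {x + c})) + (\<Sum>x\<in>Gr - Bd. phi n s L (P \<union> {x + c}))"
      using sum.subset_diff[OF BG Gr, of "\<lambda>x. phi n s L (P \<union> {x + c})"] by linarith
    also have "\<dots> \<le> (\<Sum>x\<in>Bd. L ^ (s - m)) + (\<Sum>x\<in>Gr - Bd. L ^ (s - Suc m))"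
    proof (intro add_mono sum_mono)
      fix x assume "x \<in> Bd" then show "phi n s L (P \<union> {x + c}) \<le> L ^ (s - m)"
        using phi_le[OF L mono] by blast
    next
      fix x assume "x \<in> Gr - Bd" then have "sep_number n (P \<union> {x + c}) \<ge> Suc m"
        unfolding Bd_def by auto
      then show "phi n s L (P \<union> {x + c}) \<le> L ^ (s - Suc m)" using phi_le[OF L] by blast
    qed
    also have "\<dots> = real (card Bd) * L ^ (s - m) + real (card (Gr - Bd)) * L ^ (s - Suc m)"
      by simp
    also have "\<dots> \<le> real m * L ^ (s - m) + real s * L ^ (s - Suc m)"
    proof (intro add_mono mult_right_mono)
      show "real (card Bd) \<le> real m" using cB by simp
      show "real (card (Gr - Bd)) \<le> real s" using s Gr by (simp add: card_Diff_subset[OF fB BG])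
    qed (use L in auto)
    also have "\<dots> = (real m + real s / L) * L ^ (s - m)"
    proof -
      have sm: "s - m = Suc (s - Suc m)" using True by simp
      have "L ^ (s - m) = L * L ^ (s - Suc m)" unfolding sm by simp
      then show ?thesis using L by (simp add: field_simps)
    qed
    also have "\<dots> \<le> ((real s - 1) + real s / L) * L ^ (s - m)"
      using True L by (intro mult_right_mono) auto
    also have "\<dots> = ((real s - 1) + real s / L) * phi n s L P"
      using True unfolding phi_def m_def by simp
    finally show ?thesis .
  qed
qed



lemma past_const:
  fixes y :: "'a \<Rightarrow> 'c::t2_space"
  assumes y: "y \<in> measurable (past_sigma M X i) borel"
    and w: "w \<in> space M" "w' \<in> space M" and eq: "\<forall>j\<in>{1..<i}. X j w = X j w'"
  shows "y w = y w'"
proof -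
  define G where "G = (\<Union>j\<in>{1..<i}. {X j -` A \<inter> space M | A. A \<in> sets (borel::'b measure)})"
  have Gsub: "G \<subseteq> Pow (space M)" unfolding G_def by auto
  have ps: "past_sigma M X i = sigma (space M) G" unfolding past_sigma_def G_def by simp
  have key: "w \<in> E \<longleftrightarrow> w' \<in> E" if "E \<in> sigma_sets (space M) G" for E
    using that
  proof (induction rule: sigma_sets.induct)
    case (Basic a)
    then obtain j A where "j \<in> {1..<i}" "a = X j -` A \<inter> space M" unfolding G_def by auto
    then show ?case using eq w by auto
  next
    case (Compl a) then show ?case using w by auto
  qed auto
  have sp: "space (past_sigma M X i) = space M" unfolding ps using Gsub by simp
  have "y -` {y w} \<inter> space M \<in> sets (past_sigma M X i)"
    using measurable_sets[OF y, of "{y w}"] sp by simp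
  then have "y -` {y w} \<inter> space M \<in> sigma_sets (space M) G"
    unfolding ps using Gsub by simp
  from key[OF this] w show ?thesis by auto
qed



lemma main_bound:
  fixes M :: "'a measure" and X :: "nat \<Rightarrow> 'a \<Rightarrow> real ^ 'd" and n :: nat
    and y :: "nat \<Rightarrow> 'a \<Rightarrow> real ^ 'd" and l :: nat
  assumes "prob_space M"
    and Xm: "\<And>i. i \<ge> 1 \<Longrightarrow> X i \<in> borel_measurable M"
    and ind: "prob_space.indep_vars M (\<lambda>_. borel) X {1..}"
    and unif: "\<And>i y. i \<ge> 1 \<Longrightarrow> y \<in> (grid_set n :: (real ^ 'd) set) \<Longrightarrow>
            measure M {\<omega> \<in> space M. X i \<omega> = y} = 1 / real (card (grid_set n :: (real ^ 'd) set))"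
    and ym: "\<forall>i\<ge>1. y i \<in> measurable (past_sigma M X i) borel"
  shows "measure M {\<omega> \<in> space M.
          sep_number n (\<Union>i\<in>{1..l}. {X i \<omega> + y i \<omega>})
            < card (grid_set n :: (real ^ 'd) set)}
      \<le> ((real (card (grid_set n :: (real ^ 'd) set)) - 1/2) / real (card (grid_set n :: (real ^ 'd) set))) ^ l
          * (2 * real (card (grid_set n :: (real ^ 'd) set))) ^ (card (grid_set n :: (real ^ 'd) set))"
proof -
  interpret prob_space M by fact
  define Gr where "Gr = (grid_set n :: (real ^ 'd) set)"
  define s where "s = card Gr"
  define L where "L = 2 * real s"
  define \<Omega> where "\<Omega> = space M"
  have fGr: "finite Gr" unfolding Gr_def by (rule grid_finite)
  have s1: "s \<ge> 1" unfolding s_def using fGr grid_zero[of n]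
    by (metis Gr_def One_nat_def Suc_leI card_gt_0_iff empty_iff)
  have L1: "L \<ge> 1" unfolding L_def using s1 by simp
  have gs: "\<And>x x'. x \<in> Gr \<Longrightarrow> x' \<in> Gr \<Longrightarrow> x \<noteq> x' \<Longrightarrow> dist x x' \<ge> 8 * 2 powr (- real n)"
    unfolding Gr_def by (rule grid_sep)
  define Pts where "Pts i w = (\<Union>j\<in>{1..i}. {X j w + y j w})" for i w
  define Atom where "Atom i a = {w\<in>\<Omega>. \<forall>j\<in>{1..i}. X j w = a j}" for i and a :: "nat \<Rightarrow> real^'d"
  define rep where "rep i a = (SOME w. w \<in> Atom i a)" for i a
  define W where "W i a = phi n s L (Pts i (rep i a))" for i a
  have Xs: "X j -` {v} \<inter> \<Omega> \<in> events" if "j \<ge> 1" for j v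
    unfolding \<Omega>_def using Xm[OF that] by (intro measurable_sets) auto
  have pX: "prob (X j -` {v} \<inter> \<Omega>) = 1 / real s" if "j \<ge> 1" "v \<in> Gr" for j v
  proof -
    have "X j -` {v} \<inter> \<Omega> = {w \<in> space M. X j w = v}" unfolding \<Omega>_def by auto
    then show ?thesis using unif[OF that(1), of v] that(2) unfolding Gr_def s_def by simp
  qed
  have pAtom: "prob (Atom i a) = (1 / real s) ^ i" if "a \<in> PiE {1..i} (\<lambda>_. Gr)" for i a
  proof (cases "i = 0")
    case True
    then show ?thesis unfolding Atom_def \<Omega>_def by (simp add: prob_space)
  next
    case False
    have "Atom i a = (\<Inter>j\<in>{1..i}. X j -` {a j} \<inter> \<Omega>)"
      using False unfolding Atom_def by auto
    also have "prob \<dots> = (\<Prod>j\<in>{1..i}. prob (X j -` {a j} \<inter> \<Omega>))"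
      unfolding \<Omega>_def using False by (intro indep_varsD[OF ind]) auto
    also have "\<dots> = (\<Prod>j\<in>{1..i}. 1 / real s)"
      using that by (intro prod.cong refl pX) auto
    finally show ?thesis by simp
  qed
  have Atom_ne: "rep i a \<in> Atom i a" if "a \<in> PiE {1..i} (\<lambda>_. Gr)" for i a
  proof -
    have "prob (Atom i a) > 0" using pAtom[OF that] s1 by simp
    then have "Atom i a \<noteq> {}" by auto
    then show ?thesis unfolding rep_def by (simp add: some_in_eq)
  qed
  have dep: "Pts i w = Pts i w'" if "w \<in> \<Omega>" "w' \<in> \<Omega>" "\<forall>j\<in>{1..i}. X j w = X j w'" for i w w'
  proof -
    have "y j w = y j w'" if "j \<in> {1..i}" for j
      using past_const[of "y j" M X j w w'] ym that \<open>w \<in> \<Omega>\<close> \<open>w' \<in> \<Omega>\<close> \<open>\<forall>j\<in>{1..i}. X j w = X j w'\<close>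
      unfolding \<Omega>_def by auto
    then show ?thesis unfolding Pts_def using that(3) by auto
  qed
  have finPts: "finite (Pts i w)" for i w unfolding Pts_def by auto
  have sumW: "(\<Sum>a\<in>PiE {1..i} (\<lambda>_. Gr). W i a) \<le> (real s - 1/2) ^ i * L ^ s" for i
  proof (induction i)
    case 0
    have "Pts 0 w = {}" for w unfolding Pts_def by simp
    then show ?case using s1 unfolding W_def phi_def by (simp add: sep_empty)
  next
    case (Suc i)
    let ?P = "PiE {1..i} (\<lambda>_. Gr)"
    have ins: "{1..Suc i} = insert (Suc i) {1..i}" by auto
    have "(\<Sum>a\<in>PiE {1..Suc i} (\<lambda>_. Gr). W (Suc i) a)
        = (\<Sum>a\<in>(\<lambda>(x, b). b(Suc i := x)) ` (Gr \<times> ?P). W (Suc i) a)"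
      unfolding ins PiE_insert_eq by simp
    also have "\<dots> = (\<Sum>(x, b)\<in>Gr \<times> ?P. W (Suc i) (b(Suc i := x)))"
    proof (subst sum.reindex)
      show "inj_on (\<lambda>(x, b). b(Suc i := x)) (Gr \<times> ?P)"
        using inj_combinator[of "Suc i" "{1..i}" "\<lambda>_. Gr"] by simp
    qed (simp add: case_prod_unfold)
    also have "\<dots> = (\<Sum>b\<in>?P. \<Sum>x\<in>Gr. W (Suc i) (b(Suc i := x)))"
      by (subst sum.cartesian_product[symmetric]) (rule sum.swap)
    also have "\<dots> \<le> (\<Sum>b\<in>?P. (real s - 1/2) * W i b)"
    proof (rule sum_mono)
      fix b assume b: "b \<in> ?P"
      define w where "w = rep i b"
      have w: "w \<in> Atom i b" unfolding w_def by (rule Atom_ne[OF b])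
      define c where "c = y (Suc i) w"
      have eqx: "W (Suc i) (b(Suc i := x)) = phi n s L (Pts i w \<union> {x + c})" if x: "x \<in> Gr" for x
      proof -
        define w' where "w' = rep (Suc i) (b(Suc i := x))"
        have "b(Suc i := x) \<in> PiE {1..Suc i} (\<lambda>_. Gr)" using b x unfolding ins PiE_insert_eq by auto
        then have w': "w' \<in> Atom (Suc i) (b(Suc i := x))" unfolding w'_def by (rule Atom_ne)
        have agree: "\<forall>j\<in>{1..i}. X j w' = X j w" using w w' unfolding Atom_def by auto
        have "Pts i w' = Pts i w" using w w' agree unfolding Atom_def by (intro dep) auto
        moreover have "y (Suc i) w' = c" unfolding c_def
          using past_const[of "y (Suc i)" M X "Suc i" w' w] ym w w' agree
          unfolding Atom_def \<Omega>_def by auto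
        moreover have "X (Suc i) w' = x" using w' unfolding Atom_def by auto
        moreover have "Pts (Suc i) w' = Pts i w' \<union> {X (Suc i) w' + y (Suc i) w'}"
          unfolding Pts_def ins by auto
        ultimately show ?thesis unfolding W_def w'_def by simp
      qed
      have "(\<Sum>x\<in>Gr. W (Suc i) (b(Suc i := x))) = (\<Sum>x\<in>Gr. phi n s L (Pts i w \<union> {x + c}))"
        using eqx by (rule sum.cong[OF refl])
      also have "\<dots> \<le> ((real s - 1) + real s / L) * phi n s L (Pts i w)"
        by (rule phi_step[OF finPts fGr s_def[symmetric] L1 gs])
      also have "(real s - 1) + real s / L = real s - 1/2" unfolding L_def using s1 by simp
      finally show "(\<Sum>x\<in>Gr. W (Suc i) (b(Suc i := x))) \<le> (real s - 1/2) * W i b"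
        unfolding W_def w_def by simp
    qed
    also have "\<dots> = (real s - 1/2) * (\<Sum>b\<in>?P. W i b)" by (simp add: sum_distrib_left)
    also have "\<dots> \<le> (real s - 1/2) * ((real s - 1/2) ^ i * L ^ s)"
      using Suc.IH s1 by (intro mult_left_mono) auto
    finally show ?case by simp
  qed
  define F where "F = {w\<in>\<Omega>. sep_number n (Pts l w) < s}"
  define A' where "A' = {a \<in> PiE {1..l} (\<lambda>_. Gr). sep_number n (Pts l (rep l a)) < s}"
  define Bad where "Bad = (\<Union>j\<in>{1..l}. \<Omega> - (X j -` Gr \<inter> \<Omega>))"
  have AP: "A' \<subseteq> PiE {1..l} (\<lambda>_. Gr)" unfolding A'_def by auto
  have finP: "finite (PiE {1..l} (\<lambda>_. Gr))" using fGr by (intro finite_PiE) auto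
  have finA: "finite A'" using finite_subset[OF AP finP] .
  have sub: "F \<subseteq> (\<Union>a\<in>A'. Atom l a) \<union> Bad"
  proof
    fix w assume wF: "w \<in> F"
    show "w \<in> (\<Union>a\<in>A'. Atom l a) \<union> Bad"
    proof (cases "w \<in> Bad")
      case False
      then have inG: "\<forall>j\<in>{1..l}. X j w \<in> Gr" using wF unfolding Bad_def F_def by auto
      define a where "a = restrict (\<lambda>j. X j w) {1..l}"
      have aP: "a \<in> PiE {1..l} (\<lambda>_. Gr)" unfolding a_def using inG by auto
      have wA: "w \<in> Atom l a" using wF unfolding Atom_def a_def F_def by auto
      have rA: "rep l a \<in> Atom l a" by (rule Atom_ne[OF aP])
      have "Pts l (rep l a) = Pts l w" using wA rA unfolding Atom_def by (intro dep) auto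
      then have "a \<in> A'" using aP wF unfolding A'_def F_def by auto
      then show ?thesis using wA by auto
    qed auto
  qed
  have Atom_ev: "Atom l a \<in> events" for a
  proof (cases "l = 0")
    case True then show ?thesis unfolding Atom_def \<Omega>_def by simp
  next
    case False
    have eq: "Atom l a = (\<Inter>j\<in>{1..l}. X j -` {a j} \<inter> \<Omega>)" using False unfolding Atom_def by auto
    show ?thesis unfolding eq by (rule sets.finite_INT) (use False Xs in auto)
  qed
  have XGr: "X j -` Gr \<inter> \<Omega> = (\<Union>v\<in>Gr. X j -` {v} \<inter> \<Omega>)" for j by auto
  have XG_ev: "X j -` Gr \<inter> \<Omega> \<in> events" if "j \<ge> 1" for j
    unfolding XGr using fGr Xs[OF that] by (intro sets.finite_UN) auto
  have XG1: "prob (X j -` Gr \<inter> \<Omega>) = 1" if "j \<ge> 1" for j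
  proof -
    have "prob (X j -` Gr \<inter> \<Omega>) = (\<Sum>v\<in>Gr. prob (X j -` {v} \<inter> \<Omega>))"
      unfolding XGr using fGr Xs[OF that]
      by (intro finite_measure_finite_Union) (auto simp: disjoint_family_on_def)
    also have "\<dots> = (\<Sum>v\<in>Gr. 1 / real s)" using pX[OF that] by simp
    also have "\<dots> = 1" using s1 unfolding s_def by simp
    finally show ?thesis .
  qed
  have Bad_ev: "Bad \<in> events" unfolding Bad_def \<Omega>_def using XG_ev
    by (intro sets.finite_UN) (auto simp: \<Omega>_def)
  have Bad0: "prob Bad \<le> 0"
  proof -
    have "prob Bad \<le> (\<Sum>j\<in>{1..l}. prob (\<Omega> - (X j -` Gr \<inter> \<Omega>)))"
      unfolding Bad_def using XG_ev by (intro finite_measure_subadditive_finite) (auto simp: \<Omega>_def)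
    also have "\<dots> = (\<Sum>j\<in>{1..l}. 0)"
      using XG_ev XG1 by (intro sum.cong refl) (simp add: \<Omega>_def prob_compl)
    finally show ?thesis by simp
  qed
  have U_ev: "(\<Union>a\<in>A'. Atom l a) \<in> events" using finA Atom_ev by (intro sets.finite_UN) auto
  have "prob F \<le> prob ((\<Union>a\<in>A'. Atom l a) \<union> Bad)"
    using sub U_ev Bad_ev by (intro finite_measure_mono) auto
  also have "\<dots> \<le> prob (\<Union>a\<in>A'. Atom l a) + prob Bad"
    using U_ev Bad_ev by (intro measure_Un_le) auto
  also have "prob (\<Union>a\<in>A'. Atom l a) \<le> (\<Sum>a\<in>A'. prob (Atom l a))"
    using finA Atom_ev by (intro finite_measure_subadditive_finite) auto
  also have "\<dots> = (\<Sum>a\<in>A'. (1 / real s) ^ l)" using AP pAtom by (intro sum.cong refl) auto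
  also have "\<dots> \<le> (\<Sum>a\<in>A'. W l a * (1 / real s) ^ l)"
  proof (rule sum_mono)
    fix a assume "a \<in> A'"
    then have "W l a \<ge> 1" unfolding A'_def W_def phi_def using L1 by auto
    then show "(1 / real s) ^ l \<le> W l a * (1 / real s) ^ l"
      using mult_right_mono[of 1 "W l a" "(1 / real s) ^ l"] by simp
  qed
  also have "\<dots> \<le> (\<Sum>a\<in>PiE {1..l} (\<lambda>_. Gr). W l a * (1 / real s) ^ l)"
    using AP finP L1 by (intro sum_mono2) (auto simp: W_def intro!: phi_nonneg mult_nonneg_nonneg)
  also have "\<dots> = (\<Sum>a\<in>PiE {1..l} (\<lambda>_. Gr). W l a) * (1 / real s) ^ l"
    by (simp add: sum_distrib_right)
  also have "\<dots> \<le> ((real s - 1/2) ^ l * L ^ s) * (1 / real s) ^ l"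
    using sumW[of l] by (intro mult_right_mono) auto
  finally have fin: "prob F \<le> ((real s - 1/2) / real s) ^ l * L ^ s"
    using Bad0 by (simp add: power_divide field_simps)
  show ?thesis using fin unfolding F_def Pts_def L_def s_def Gr_def \<Omega>_def by simp
qed


theorem mainTheorem8:
  fixes M :: "'a measure" and X :: "nat \<Rightarrow> 'a \<Rightarrow> real ^ 'd" and n k :: nat
  assumes "prob_space M"
    and "n \<ge> 1" and "k \<ge> 1"
    and "\<And>i. i \<ge> 1 \<Longrightarrow> X i \<in> borel_measurable M"
    and "prob_space.indep_vars M (\<lambda>_. borel) X {1..}"
    and "\<And>i y. i \<ge> 1 \<Longrightarrow> y \<in> (grid_set n :: (real ^ 'd) set) \<Longrightarrow>
            measure M {\<omega> \<in> space M. X i \<omega> = y} = 1 / real (card (grid_set n :: (real ^ 'd) set))"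
  shows "\<exists>l::nat. l \<ge> 1 \<and>
    (\<forall>y :: nat \<Rightarrow> 'a \<Rightarrow> real ^ 'd.
       (\<forall>i\<ge>1. y i \<in> measurable (past_sigma M X i) borel) \<longrightarrow>
       measure M {\<omega> \<in> space M.
          sep_number n (\<Union>i\<in>{1..l}. {X i \<omega> + y i \<omega>})
            < card (grid_set n :: (real ^ 'd) set)}
         \<le> 1 / (real k * 2 ^ n))"
proof -
  define s where "s = card (grid_set n :: (real ^ 'd) set)"
  have s1: "s \<ge> 1" unfolding s_def using grid_finite[where 'd='d, of n] grid_zero[where 'd='d, of n]
    by (metis One_nat_def Suc_leI card_gt_0_iff empty_iff)
  define q where "q = (real s - 1/2) / real s"
  define K where "K = (2 * real s) ^ s"
  have q0: "q \<ge> 0" and q1: "q < 1" unfolding q_def using s1 by (auto simp: field_simps)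
  have K0: "K > 0" unfolding K_def using s1 by simp
  have eps: "1 / (real k * 2 ^ n) / K > 0" using assms(3) K0 by simp
  obtain m where m: "q ^ m < 1 / (real k * 2 ^ n) / K" using real_arch_pow_inv[OF eps q1] by blast
  have le: "q ^ Suc m \<le> q ^ m" using q0 q1 by (simp add: mult_left_le_one_le)
  have mK: "q ^ m * K < 1 / (real k * 2 ^ n)" using m pos_less_divide_eq[OF K0] by blast
  have "q ^ Suc m * K \<le> q ^ m * K" using mult_right_mono[OF le, of K] K0 by simp
  then have qm: "q ^ Suc m * K \<le> 1 / (real k * 2 ^ n)" using mK by linarith
  show ?thesis
  proof (intro exI[of _ "Suc m"] conjI allI impI)
    fix y :: "nat \<Rightarrow> 'a \<Rightarrow> real ^ 'd"
    assume ym: "\<forall>i\<ge>1. y i \<in> measurable (past_sigma M X i) borel"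
    have "measure M {\<omega> \<in> space M.
          sep_number n (\<Union>i\<in>{1..Suc m}. {X i \<omega> + y i \<omega>})
            < card (grid_set n :: (real ^ 'd) set)} \<le> q ^ Suc m * K"
      using main_bound[OF assms(1,4,5,6) ym, of "Suc m"] unfolding q_def K_def s_def by simp
    then show "measure M {\<omega> \<in> space M.
          sep_number n (\<Union>i\<in>{1..Suc m}. {X i \<omega> + y i \<omega>})
            < card (grid_set n :: (real ^ 'd) set)} \<le> 1 / (real k * 2 ^ n)"
      using qm by linarith
  qed simp
qed

end
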